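(* Let $R$ be a commutative ring with identity and $a\in R$. The functor $a\Gamma_a: R\text{-Mod}\to R\text{-Mod}$, $M\mapsto a\Gamma_a(M)$, is a radical: for every $R$-module homomorphism $f:M\to N$ one has $f(a\Gamma_a(M))\subseteq a\Gamma_a(N)$, and for every $R$-module $M$ one has $a\Gamma_a(M/a\Gamma_a(M))=0$.
   Context: For an $R$-module $M$ and $a\in R$: $\Gamma_{a}(M)=\{m\in M \mid a^{k}m=0 \text{ for some } k\in\mathbb{Z}^{+}\}$ and $a\Gamma_{a}(M)=\{am \mid m\in \Gamma_a(M)\}$ (a submodule of $M$). A functor $\gamma$ assigning to each module $M$ a submodule $\gamma(M)$ is a preradical if $f(\gamma(M))\subseteq\gamma(N)$ for all homomorphisms $f:M\to N$, and a radical if moreover $\gamma(M/\gamma(M))=0$ for all $M$. *)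

theory Defs
  imports "HOL-Algebra.Module" "HOL-Algebra.AbelCoset"
begin

definition module_hom ::
  "('a, 'r) ring_scheme \<Rightarrow> ('a, 'b, 'm) module_scheme \<Rightarrow> ('a, 'c, 'n) module_scheme
   \<Rightarrow> ('b \<Rightarrow> 'c) set" where
  "module_hom R M N = {f. f \<in> carrier M \<rightarrow> carrier N \<and>
     (\<forall>x\<in>carrier M. \<forall>y\<in>carrier M. f (x \<oplus>\<^bsub>M\<^esub> y) = f x \<oplus>\<^bsub>N\<^esub> f y) \<and>
     (\<forall>r\<in>carrier R. \<forall>x\<in>carrier M. f (r \<odot>\<^bsub>M\<^esub> x) = r \<odot>\<^bsub>N\<^esub> f x)}"

definition Gamma ::
  "('a, 'r) ring_scheme \<Rightarrow> ('a, 'b, 'm) module_scheme \<Rightarrow> 'a \<Rightarrow> 'b set" where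
  "Gamma R M a = {m \<in> carrier M. \<exists>k::nat. k > 0 \<and> (a [^]\<^bsub>R\<^esub> k) \<odot>\<^bsub>M\<^esub> m = \<zero>\<^bsub>M\<^esub>}"

definition aGamma ::
  "('a, 'r) ring_scheme \<Rightarrow> ('a, 'b, 'm) module_scheme \<Rightarrow> 'a \<Rightarrow> 'b set" where
  "aGamma R M a = (\<lambda>m. a \<odot>\<^bsub>M\<^esub> m) ` Gamma R M a"

text \<open>The ring-multiplication and one
  fields of the HOL-Algebra module record are irrelevant for modules and set trivially.\<close>
definition quot_module ::
  "('a, 'r) ring_scheme \<Rightarrow> ('a, 'b, 'm) module_scheme \<Rightarrow> 'b set \<Rightarrow> ('a, 'b set) module" where
  "quot_module R M K =
     \<lparr> carrier = a_rcosets\<^bsub>M\<^esub> K,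
       mult = (\<lambda>X Y. K), one = K, zero = K,
       add = set_add M,
       smult = (\<lambda>r X. K <+>\<^bsub>M\<^esub> ((\<lambda>x. r \<odot>\<^bsub>M\<^esub> x) ` X)) \<rparr>"

end

theory Submission
  imports Defs
begin

lemma (in module) pow_closed_a: "a \<in> carrier R \<Longrightarrow> a [^]\<^bsub>R\<^esub> (k::nat) \<in> carrier R"
  by simp

lemma (in module) Gamma_sub: "Gamma R M a \<subseteq> carrier M"
  unfolding Gamma_def by auto

lemma (in module) Gamma_zero: "a \<in> carrier R \<Longrightarrow> \<zero>\<^bsub>M\<^esub> \<in> Gamma R M a"
  unfolding Gamma_def by (auto intro: exI[of _ 1])

lemma (in module) Gamma_add:
  assumes a: "a \<in> carrier R" and m: "m \<in> Gamma R M a" and n: "n \<in> Gamma R M a"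
  shows "m \<oplus>\<^bsub>M\<^esub> n \<in> Gamma R M a"
proof -
  from m obtain k :: nat where k: "k > 0" "(a [^]\<^bsub>R\<^esub> k) \<odot>\<^bsub>M\<^esub> m = \<zero>\<^bsub>M\<^esub>" "m \<in> carrier M"
    unfolding Gamma_def by auto
  from n obtain j :: nat where j: "j > 0" "(a [^]\<^bsub>R\<^esub> j) \<odot>\<^bsub>M\<^esub> n = \<zero>\<^bsub>M\<^esub>" "n \<in> carrier M"
    unfolding Gamma_def by auto
  have e1: "(a [^]\<^bsub>R\<^esub> (j + k)) \<odot>\<^bsub>M\<^esub> m = \<zero>\<^bsub>M\<^esub>"
    using k a by (simp add: R.nat_pow_mult[symmetric] smult_assoc1)
  have e2: "(a [^]\<^bsub>R\<^esub> (j + k)) \<odot>\<^bsub>M\<^esub> n = \<zero>\<^bsub>M\<^esub>"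
    using j a by (simp add: R.nat_pow_mult[symmetric] smult_assoc1 add.commute[of j k])
  show ?thesis unfolding Gamma_def using k j e1 e2 a
    by (auto simp: smult_r_distr intro!: exI[of _ "j+k"])
qed

lemma (in module) Gamma_neg:
  assumes a: "a \<in> carrier R" and m: "m \<in> Gamma R M a"
  shows "\<ominus>\<^bsub>M\<^esub> m \<in> Gamma R M a"
  using m a unfolding Gamma_def by (auto simp: smult_r_minus)

lemma (in module) Gamma_smult:
  assumes a: "a \<in> carrier R" and r: "r \<in> carrier R" and m: "m \<in> Gamma R M a"
  shows "r \<odot>\<^bsub>M\<^esub> m \<in> Gamma R M a"
proof -
  from m obtain k :: nat where k: "k > 0" "(a [^]\<^bsub>R\<^esub> k) \<odot>\<^bsub>M\<^esub> m = \<zero>\<^bsub>M\<^esub>" "m \<in> carrier M"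
    unfolding Gamma_def by auto
  have "(a [^]\<^bsub>R\<^esub> k) \<odot>\<^bsub>M\<^esub> (r \<odot>\<^bsub>M\<^esub> m) = r \<odot>\<^bsub>M\<^esub> ((a [^]\<^bsub>R\<^esub> k) \<odot>\<^bsub>M\<^esub> m)"
    using a r k by (metis R.m_comm R.nat_pow_closed smult_assoc1)
  also have "\<dots> = \<zero>\<^bsub>M\<^esub>" using k a r by simp
  finally have "(a [^]\<^bsub>R\<^esub> k) \<odot>\<^bsub>M\<^esub> (r \<odot>\<^bsub>M\<^esub> m) = \<zero>\<^bsub>M\<^esub>" .
  then show ?thesis using k a r unfolding Gamma_def by blast
qed

lemma (in module) aG_sub: "a \<in> carrier R \<Longrightarrow> aGamma R M a \<subseteq> carrier M"
  unfolding aGamma_def using Gamma_sub by auto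

lemma (in module) aG_zero: "a \<in> carrier R \<Longrightarrow> \<zero>\<^bsub>M\<^esub> \<in> aGamma R M a"
  unfolding aGamma_def using Gamma_zero by (auto intro!: image_eqI[of _ _ "\<zero>\<^bsub>M\<^esub>"])

lemma (in module) aG_add:
  assumes a: "a \<in> carrier R" and x: "x \<in> aGamma R M a" and y: "y \<in> aGamma R M a"
  shows "x \<oplus>\<^bsub>M\<^esub> y \<in> aGamma R M a"
proof -
  from x obtain m where m: "m \<in> Gamma R M a" "x = a \<odot>\<^bsub>M\<^esub> m" unfolding aGamma_def by auto
  from y obtain n where n: "n \<in> Gamma R M a" "y = a \<odot>\<^bsub>M\<^esub> n" unfolding aGamma_def by auto
  have "m \<in> carrier M" "n \<in> carrier M" using m n Gamma_sub by blast+
  then have "x \<oplus>\<^bsub>M\<^esub> y = a \<odot>\<^bsub>M\<^esub> (m \<oplus>\<^bsub>M\<^esub> n)" using m n a by (simp add: smult_r_distr)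
  then show ?thesis unfolding aGamma_def using Gamma_add[OF a m(1) n(1)] by auto
qed

lemma (in module) aG_neg:
  assumes a: "a \<in> carrier R" and x: "x \<in> aGamma R M a"
  shows "\<ominus>\<^bsub>M\<^esub> x \<in> aGamma R M a"
proof -
  from x obtain m where m: "m \<in> Gamma R M a" "x = a \<odot>\<^bsub>M\<^esub> m" unfolding aGamma_def by auto
  have "m \<in> carrier M" using m Gamma_sub by blast
  then have "\<ominus>\<^bsub>M\<^esub> x = a \<odot>\<^bsub>M\<^esub> (\<ominus>\<^bsub>M\<^esub> m)" using m a by (simp add: smult_r_minus)
  then show ?thesis unfolding aGamma_def using Gamma_neg[OF a m(1)] by auto
qed

lemma (in module) aG_smult:
  assumes a: "a \<in> carrier R" and r: "r \<in> carrier R" and x: "x \<in> aGamma R M a"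
  shows "r \<odot>\<^bsub>M\<^esub> x \<in> aGamma R M a"
proof -
  from x obtain m where m: "m \<in> Gamma R M a" "x = a \<odot>\<^bsub>M\<^esub> m" unfolding aGamma_def by auto
  have mc: "m \<in> carrier M" using m Gamma_sub by blast
  have "r \<odot>\<^bsub>M\<^esub> x = (r \<otimes> a) \<odot>\<^bsub>M\<^esub> m" using m a r mc by (simp add: smult_assoc1)
  also have "\<dots> = a \<odot>\<^bsub>M\<^esub> (r \<odot>\<^bsub>M\<^esub> m)" using a r mc by (simp add: smult_assoc1[symmetric] R.m_comm)
  finally have "r \<odot>\<^bsub>M\<^esub> x = a \<odot>\<^bsub>M\<^esub> (r \<odot>\<^bsub>M\<^esub> m)" .
  then show ?thesis unfolding aGamma_def using Gamma_smult[OF a r m(1)] by auto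
qed


lemma (in module) coset_K:
  assumes a: "a \<in> carrier R" and y: "y \<in> carrier M"
  shows "(aGamma R M a +>\<^bsub>M\<^esub> y = aGamma R M a) \<longleftrightarrow> y \<in> aGamma R M a"
proof
  assume "aGamma R M a +>\<^bsub>M\<^esub> y = aGamma R M a"
  moreover have "\<zero>\<^bsub>M\<^esub> \<oplus>\<^bsub>M\<^esub> y \<in> aGamma R M a +>\<^bsub>M\<^esub> y"
    using aG_zero[OF a] by (auto simp: a_r_coset_def')
  ultimately show "y \<in> aGamma R M a" using y by simp
next
  assume yK: "y \<in> aGamma R M a"
  show "aGamma R M a +>\<^bsub>M\<^esub> y = aGamma R M a"
  proof
    show "aGamma R M a +>\<^bsub>M\<^esub> y \<subseteq> aGamma R M a"
      using aG_add[OF a _ yK] by (auto simp: a_r_coset_def')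
    show "aGamma R M a \<subseteq> aGamma R M a +>\<^bsub>M\<^esub> y"
    proof
      fix k assume k: "k \<in> aGamma R M a"
      have kc: "k \<in> carrier M" using k aG_sub[OF a] by blast
      have "k = (k \<oplus>\<^bsub>M\<^esub> \<ominus>\<^bsub>M\<^esub> y) \<oplus>\<^bsub>M\<^esub> y" using kc y
        by (simp add: M.add.m_assoc M.l_neg)
      moreover have "k \<oplus>\<^bsub>M\<^esub> \<ominus>\<^bsub>M\<^esub> y \<in> aGamma R M a" using aG_add[OF a k aG_neg[OF a yK]] .
      ultimately show "k \<in> aGamma R M a +>\<^bsub>M\<^esub> y" unfolding a_r_coset_def' by blast
    qed
  qed
qed

lemma (in module) Q_smult:
  assumes a: "a \<in> carrier R" and r: "r \<in> carrier R" and m: "m \<in> carrier M"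
  shows "smult (quot_module R M (aGamma R M a)) r (aGamma R M a +>\<^bsub>M\<^esub> m)
         = aGamma R M a +>\<^bsub>M\<^esub> (r \<odot>\<^bsub>M\<^esub> m)"
proof -
  let ?K = "aGamma R M a"
  have Kc: "?K \<subseteq> carrier M" by (rule aG_sub[OF a])
  show ?thesis unfolding quot_module_def
  proof (simp, intro equalityI subsetI)
    fix x assume "x \<in> ?K <+>\<^bsub>M\<^esub> (\<lambda>x. r \<odot>\<^bsub>M\<^esub> x) ` (?K +>\<^bsub>M\<^esub> m)"
    then obtain k1 k2 where k: "k1 \<in> ?K" "k2 \<in> ?K" "x = k1 \<oplus>\<^bsub>M\<^esub> r \<odot>\<^bsub>M\<^esub> (k2 \<oplus>\<^bsub>M\<^esub> m)"
      unfolding set_add_def' a_r_coset_def' by blast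
    have c: "k1 \<in> carrier M" "k2 \<in> carrier M" using k Kc by blast+
    have "x = (k1 \<oplus>\<^bsub>M\<^esub> r \<odot>\<^bsub>M\<^esub> k2) \<oplus>\<^bsub>M\<^esub> r \<odot>\<^bsub>M\<^esub> m"
      using k(3) c r m by (simp add: smult_r_distr M.add.m_assoc)
    moreover have "k1 \<oplus>\<^bsub>M\<^esub> r \<odot>\<^bsub>M\<^esub> k2 \<in> ?K" using aG_add[OF a k(1) aG_smult[OF a r k(2)]] .
    ultimately show "x \<in> ?K +>\<^bsub>M\<^esub> (r \<odot>\<^bsub>M\<^esub> m)" unfolding a_r_coset_def' by blast
  next
    fix x assume "x \<in> ?K +>\<^bsub>M\<^esub> (r \<odot>\<^bsub>M\<^esub> m)"
    then obtain k where k: "k \<in> ?K" "x = k \<oplus>\<^bsub>M\<^esub> r \<odot>\<^bsub>M\<^esub> m"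
      unfolding a_r_coset_def' by blast
    have "r \<odot>\<^bsub>M\<^esub> m = r \<odot>\<^bsub>M\<^esub> (\<zero>\<^bsub>M\<^esub> \<oplus>\<^bsub>M\<^esub> m)" using m by simp
    then have "x = k \<oplus>\<^bsub>M\<^esub> r \<odot>\<^bsub>M\<^esub> (\<zero>\<^bsub>M\<^esub> \<oplus>\<^bsub>M\<^esub> m)" using k by simp
    then show "x \<in> ?K <+>\<^bsub>M\<^esub> (\<lambda>x. r \<odot>\<^bsub>M\<^esub> x) ` (?K +>\<^bsub>M\<^esub> m)"
      unfolding set_add_def' a_r_coset_def' using k(1) aG_zero[OF a] by blast
  qed
qed

lemma (in module) quot_part:
  assumes a: "a \<in> carrier R"
  shows "aGamma R (quot_module R M (aGamma R M a)) a
              = {\<zero>\<^bsub>quot_module R M (aGamma R M a)\<^esub>}"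
proof -
  let ?K = "aGamma R M a" and ?Q = "quot_module R M (aGamma R M a)"
  have z: "\<zero>\<^bsub>?Q\<^esub> = ?K" by (simp add: quot_module_def)
  have car: "carrier ?Q = (\<Union>m\<in>carrier M. {?K +>\<^bsub>M\<^esub> m})"
    by (simp add: quot_module_def A_RCOSETS_def')
  have K0: "?K = ?K +>\<^bsub>M\<^esub> \<zero>\<^bsub>M\<^esub>" using coset_K[OF a, of "\<zero>\<^bsub>M\<^esub>"] aG_zero[OF a] by simp
  have KG: "?K \<in> Gamma R ?Q a"
  proof -
    have "smult ?Q (a [^]\<^bsub>R\<^esub> (1::nat)) ?K = ?K"
      using Q_smult[OF a _ M.zero_closed, of "a [^]\<^bsub>R\<^esub> (1::nat)"] a K0 by simp
    moreover have "?K \<in> carrier ?Q" using car K0 by blast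
    ultimately show ?thesis unfolding Gamma_def z by (auto intro!: exI[of _ 1])
  qed
  show ?thesis
  proof (intro equalityI subsetI)
    fix X assume "X \<in> aGamma R ?Q a"
    then obtain Y where Y: "Y \<in> Gamma R ?Q a" "X = smult ?Q a Y" unfolding aGamma_def by auto
    then obtain k :: nat where k: "k > 0" "smult ?Q (a [^]\<^bsub>R\<^esub> k) Y = ?K" "Y \<in> carrier ?Q"
      unfolding Gamma_def z by auto
    then obtain m where m: "m \<in> carrier M" "Y = ?K +>\<^bsub>M\<^esub> m" using car by blast
    have "?K +>\<^bsub>M\<^esub> ((a [^]\<^bsub>R\<^esub> k) \<odot>\<^bsub>M\<^esub> m) = ?K"
      using k(2) Q_smult[OF a _ m(1), of "a [^]\<^bsub>R\<^esub> k"] a m(2) by simp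
    then have "(a [^]\<^bsub>R\<^esub> k) \<odot>\<^bsub>M\<^esub> m \<in> ?K" using coset_K[OF a] a m(1) by simp
    then obtain n where n: "n \<in> Gamma R M a" "(a [^]\<^bsub>R\<^esub> k) \<odot>\<^bsub>M\<^esub> m = a \<odot>\<^bsub>M\<^esub> n"
      unfolding aGamma_def by auto
    obtain j :: nat where j: "j > 0" "(a [^]\<^bsub>R\<^esub> j) \<odot>\<^bsub>M\<^esub> n = \<zero>\<^bsub>M\<^esub>" "n \<in> carrier M"
      using n(1) unfolding Gamma_def by auto
    have "(a [^]\<^bsub>R\<^esub> (j + k)) \<odot>\<^bsub>M\<^esub> m = (a [^]\<^bsub>R\<^esub> j) \<odot>\<^bsub>M\<^esub> ((a [^]\<^bsub>R\<^esub> k) \<odot>\<^bsub>M\<^esub> m)"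
      using a m by (simp add: R.nat_pow_mult[symmetric] smult_assoc1)
    also have "\<dots> = (a [^]\<^bsub>R\<^esub> j) \<odot>\<^bsub>M\<^esub> (a \<odot>\<^bsub>M\<^esub> n)" using n by simp
    also have "\<dots> = a \<odot>\<^bsub>M\<^esub> ((a [^]\<^bsub>R\<^esub> j) \<odot>\<^bsub>M\<^esub> n)"
      using a j by (metis R.m_comm R.nat_pow_closed smult_assoc1)
    also have "\<dots> = \<zero>\<^bsub>M\<^esub>" using j a by simp
    finally have "m \<in> Gamma R M a" unfolding Gamma_def using m(1) k(1) by (auto intro!: exI[of _ "j+k"])
    then have "a \<odot>\<^bsub>M\<^esub> m \<in> ?K" unfolding aGamma_def by blast
    then have "?K +>\<^bsub>M\<^esub> (a \<odot>\<^bsub>M\<^esub> m) = ?K" using coset_K[OF a] a m(1) by simp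
    then have "X = ?K" using Y(2) m(2) Q_smult[OF a a m(1)] by simp
    then show "X \<in> {\<zero>\<^bsub>?Q\<^esub>}" using z by simp
  next
    fix X assume "X \<in> {\<zero>\<^bsub>?Q\<^esub>}"
    then have X: "X = ?K" using z by simp
    have "smult ?Q a ?K = ?K" using Q_smult[OF a a M.zero_closed] a K0 by simp
    then show "X \<in> aGamma R ?Q a" unfolding aGamma_def[of R ?Q a] using KG X by (intro image_eqI[of _ _ ?K]) simp_all
  qed
qed

lemma (in module) hom_zero:
  assumes N: "module R N" and f: "f \<in> module_hom R M N"
  shows "f \<zero>\<^bsub>M\<^esub> = \<zero>\<^bsub>N\<^esub>"
proof -
  interpret N: module R N by (rule N)
  have fc: "f \<zero>\<^bsub>M\<^esub> \<in> carrier N" using f unfolding module_hom_def by auto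
  have "f \<zero>\<^bsub>M\<^esub> = f (\<zero>\<^bsub>M\<^esub> \<oplus>\<^bsub>M\<^esub> \<zero>\<^bsub>M\<^esub>)" by simp
  also have "\<dots> = f \<zero>\<^bsub>M\<^esub> \<oplus>\<^bsub>N\<^esub> f \<zero>\<^bsub>M\<^esub>" using f M.zero_closed unfolding module_hom_def by blast
  finally show ?thesis using fc by (metis N.add.r_cancel_one' N.r_zero)
qed

lemma (in module) hom_part:
  assumes a: "a \<in> carrier R" and N: "module R N" and f: "f \<in> module_hom R M N"
  shows "f ` aGamma R M a \<subseteq> aGamma R N a"
proof
  interpret N: module R N by (rule N)
  fix y assume "y \<in> f ` aGamma R M a"
  then obtain m where m: "m \<in> Gamma R M a" "y = f (a \<odot>\<^bsub>M\<^esub> m)" unfolding aGamma_def by auto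
  obtain k :: nat where k: "k > 0" "(a [^]\<^bsub>R\<^esub> k) \<odot>\<^bsub>M\<^esub> m = \<zero>\<^bsub>M\<^esub>" "m \<in> carrier M"
    using m(1) unfolding Gamma_def by auto
  have sm: "\<And>r x. r \<in> carrier R \<Longrightarrow> x \<in> carrier M \<Longrightarrow> f (r \<odot>\<^bsub>M\<^esub> x) = r \<odot>\<^bsub>N\<^esub> f x"
    using f unfolding module_hom_def by auto
  have fc: "f m \<in> carrier N" using f k(3) unfolding module_hom_def by auto
  have "(a [^]\<^bsub>R\<^esub> k) \<odot>\<^bsub>N\<^esub> f m = \<zero>\<^bsub>N\<^esub>"
    using sm[of "a [^]\<^bsub>R\<^esub> k" m] k a hom_zero[OF N f] by simp
  then have "f m \<in> Gamma R N a" unfolding Gamma_def using fc k(1) by blast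
  moreover have "y = a \<odot>\<^bsub>N\<^esub> f m" using m(2) sm[OF a k(3)] by simp
  ultimately show "y \<in> aGamma R N a" unfolding aGamma_def by blast
qed

theorem mainTheorem6:
  fixes R :: "('a, 'r) ring_scheme" and a :: 'a
  assumes "cring R" and "a \<in> carrier R"
  shows "(\<forall>(M :: ('a, 'b) module) (N :: ('a, 'c) module) f.
            module R M \<and> module R N \<and> f \<in> module_hom R M N \<longrightarrow>
            f ` aGamma R M a \<subseteq> aGamma R N a)
       \<and> (\<forall>M :: ('a, 'b) module. module R M \<longrightarrow>
            aGamma R (quot_module R M (aGamma R M a)) a
              = {\<zero>\<^bsub>quot_module R M (aGamma R M a)\<^esub>})"
  using module.hom_part[OF _ assms(2)] module.quot_part[OF _ assms(2)] by blast

end
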